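(* Let $\mathcal D$ be partitioned into rectangles $K_{ij}$, let $V_h^k$ be the space of piecewise polynomials of degree at most $k$ on this mesh, $\mathbf V_h^k$ the $M$-vectors with entries in $V_h^k$, and let $\mathbf A(\mathbf x)=(a_{kj})$ be a symmetric positive definite $M\times M$ matrix function, smooth on each cell, with $\bar{\mathbf A}$ the matrix of gradients $(\nabla a_{kl})$. Let $\Delta t>0$ be a uniform time step and consider the fully discrete LDG–leapfrog scheme: find $\widehat{\mathbf v}_h^{n+1}\in\mathbf V_h^k$ and $\widehat{\mathbf S}_h^n\in(\mathbf V_h^k)^2$ such that for every cell $K$ with outward normal $\boldsymbol\nu$, $$\int_K\frac{\widehat{\mathbf v}_h^{n+1}-2\widehat{\mathbf v}_h^n+\widehat{\mathbf v}_h^{n-1}}{(\Delta t)^2}\cdot\mathbf p_h\,d\mathbf x+\int_K\mathbf A\widehat{\mathbf S}_h^n\cdot\nabla\mathbf p_h\,d\mathbf x-\big(\mathbf A^-(\widehat{\mathbf S}_h^n)^-\boldsymbol\nu,\mathbf p_h\big)_{\partial K}=0\quad\forall\mathbf p_h\in\mathbf V_h^k,$$ $$\int_K\widehat{\mathbf S}_h^n\cdot\mathbf w_h\,d\mathbf x+\int_K\mathbf A\widehat{\mathbf v}_h^n\cdot\operatorname{div}\mathbf w_h\,d\mathbf x+\int_K\bar{\mathbf A}\widehat{\mathbf v}_h^n\cdot\mathbf w_h\,d\mathbf x-\big(\mathbf A(\widehat{\mathbf v}_h^n)^+,\mathbf w_h\boldsymbol\nu\big)_{\partial K}=0\quad\forall\mathbf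 w_h\in(\mathbf V_h^k)^2,$$ with alternating traces ($-$: left/lower, $+$: right/upper) and homogeneous Dirichlet boundary conditions on $\partial\mathcal D$. Then the fully discrete energy $$E_h^{n+1}=\Big\|\frac{\widehat{\mathbf v}_h^{n+1}-\widehat{\mathbf v}_h^n}{\Delta t}\Big\|^2+\Big\|\frac{\widehat{\mathbf S}_h^{n+1}+\widehat{\mathbf S}_h^n}{2}\Big\|^2-\frac{(\Delta t)^2}{4}\Big\|\frac{\widehat{\mathbf S}_h^{n+1}-\widehat{\mathbf S}_h^n}{\Delta t}\Big\|^2$$ (with $\|\cdot\|$ the $L^2(\mathcal D)$ norm) is conserved by the scheme for all $n$, i.e. $E_h^{n+1}=E_h^n$.
   Context: The scheme discretizes the stochastic Galerkin system $\partial_t^2\widehat{\mathbf v}=\operatorname{div}(\mathbf A\widehat{\mathbf S})$, $\widehat{\mathbf S}=\mathbf A\nabla\widehat{\mathbf v}$ with $\widehat{\mathbf v}=0$ on $\partial\mathcal D$, where $a_{kj}(\mathbf x)=\int a(\mathbf x,\mathbf y)\Phi_k\Phi_j\rho\,d\mathbf y$. In the boundary term of the second equation $\mathbf A$ is evaluated from inside the cell; $\mathbf A^-$ has entries $a_{kj}^-$. "$\cdot$" denotes the Euclidean/Frobenius inner product, and divergence/gradient act row-wise. $\widehat{\mathbf v}_h^n,\widehat{\mathbf S}_h^n$ are the approximations at $t_n=n\Delta t$. *)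

theory Defs
  imports "HOL-Analysis.Analysis"
begin

text \<open>Discrete functions are stored cell-wise: the restriction to each cell is a polynomial,
  which we store as a polynomial function on the whole plane (this gives the one-sided traces).\<close>

definition cell :: "(nat \<Rightarrow> real) \<Rightarrow> (nat \<Rightarrow> real) \<Rightarrow> nat \<Rightarrow> nat \<Rightarrow> (real \<times> real) set" where
  "cell x y i j = cbox (x i, y j) (x (Suc i), y (Suc j))"

definition poly2 :: "nat \<Rightarrow> (real \<times> real \<Rightarrow> real) \<Rightarrow> bool" where
  "poly2 k f \<longleftrightarrow> (\<exists>c :: nat \<Rightarrow> nat \<Rightarrow> real.
      \<forall>a b. f (a, b) = (\<Sum>i\<le>k. \<Sum>j\<le>k - i. c i j * a ^ i * b ^ j))"

definition pdx :: "(real \<times> real \<Rightarrow> real) \<Rightarrow> real \<times> real \<Rightarrow> real" where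
  "pdx f z = deriv (\<lambda>s. f (s, snd z)) (fst z)"

definition pdy :: "(real \<times> real \<Rightarrow> real) \<Rightarrow> real \<times> real \<Rightarrow> real" where
  "pdy f z = deriv (\<lambda>t. f (fst z, t)) (snd z)"

definition grad :: "(real \<times> real \<Rightarrow> real) \<Rightarrow> real \<times> real \<Rightarrow> real \<times> real" where
  "grad f z = (pdx f z, pdy f z)"

definition dive :: "(real \<times> real \<Rightarrow> real \<times> real) \<Rightarrow> real \<times> real \<Rightarrow> real" where
  "dive w z = pdx (\<lambda>u. fst (w u)) z + pdy (\<lambda>u. snd (w u)) z"

fun Ck :: "nat \<Rightarrow> (real \<times> real \<Rightarrow> real) \<Rightarrow> (real \<times> real) set \<Rightarrow> bool" where
  "Ck 0 f U = continuous_on U f"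
| "Ck (Suc n) f U = (continuous_on U f \<and>
     (\<forall>z\<in>U. (\<lambda>s. f (s, snd z)) differentiable (at (fst z)) \<and>
             (\<lambda>t. f (fst z, t)) differentiable (at (snd z))) \<and>
     Ck n (pdx f) U \<and> Ck n (pdy f) U)"

definition smooth_near :: "(real \<times> real \<Rightarrow> real) \<Rightarrow> (real \<times> real) set \<Rightarrow> bool" where
  "smooth_near f S \<longleftrightarrow> (\<exists>U. open U \<and> S \<subseteq> U \<and> (\<forall>n. Ck n f U))"

text \<open>Boundary term (A^- S^- nu, p) over the four edges; "-" = left/lower cell; on the boundary of
  the domain the interior trace is used for S (and A).\<close>
definition eq1 ::
  "(nat \<Rightarrow> real) \<Rightarrow> (nat \<Rightarrow> real) \<Rightarrow> nat \<Rightarrow> real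
   \<Rightarrow> (nat \<Rightarrow> nat \<Rightarrow> nat \<Rightarrow> nat \<Rightarrow> real \<times> real \<Rightarrow> real)
   \<Rightarrow> (nat \<Rightarrow> nat \<Rightarrow> nat \<Rightarrow> nat \<Rightarrow> real \<times> real \<Rightarrow> real)
   \<Rightarrow> (nat \<Rightarrow> nat \<Rightarrow> nat \<Rightarrow> nat \<Rightarrow> real \<times> real \<Rightarrow> real \<times> real)
   \<Rightarrow> nat \<Rightarrow> nat \<Rightarrow> nat \<Rightarrow> (nat \<Rightarrow> real \<times> real \<Rightarrow> real) \<Rightarrow> bool" where
  "eq1 x y M dt A v S n i j p \<longleftrightarrow>
    (let il = (if i = 0 then i else i - 1); jl = (if j = 0 then j else j - 1) in
     (\<Sum>k<M. integral (cell x y i j)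
        (\<lambda>z. (v (Suc n) k i j z - 2 * v n k i j z + v (n - 1) k i j z) / dt ^ 2 * p k z))
   + (\<Sum>k<M. integral (cell x y i j)
        (\<lambda>z. (\<Sum>l<M. A i j k l z *\<^sub>R S n l i j z) \<bullet> grad (p k) z))
   - (\<Sum>k<M.
        integral {y j..y (Suc j)} (\<lambda>t. (\<Sum>l<M. A i j k l (x (Suc i), t) * fst (S n l i j (x (Suc i), t)))
                                        * p k (x (Suc i), t))
      - integral {y j..y (Suc j)} (\<lambda>t. (\<Sum>l<M. A il j k l (x i, t) * fst (S n l il j (x i, t)))
                                        * p k (x i, t))
      + integral {x i..x (Suc i)} (\<lambda>s. (\<Sum>l<M. A i j k l (s, y (Suc j)) * snd (S n l i j (s, y (Suc j))))
                                        * p k (s, y (Suc j)))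
      - integral {x i..x (Suc i)} (\<lambda>s. (\<Sum>l<M. A i jl k l (s, y j) * snd (S n l i jl (s, y j)))
                                        * p k (s, y j)))
   = 0)"

text \<open>Boundary term (A (v)^+, w nu) with A from inside the cell; "+" = right/upper cell;
  on the boundary of the domain the homogeneous Dirichlet value 0 is used for v.\<close>
definition eq2 ::
  "(nat \<Rightarrow> real) \<Rightarrow> (nat \<Rightarrow> real) \<Rightarrow> nat \<Rightarrow> nat \<Rightarrow> nat
   \<Rightarrow> (nat \<Rightarrow> nat \<Rightarrow> nat \<Rightarrow> nat \<Rightarrow> real \<times> real \<Rightarrow> real)
   \<Rightarrow> (nat \<Rightarrow> nat \<Rightarrow> nat \<Rightarrow> nat \<Rightarrow> real \<times> real \<Rightarrow> real)
   \<Rightarrow> (nat \<Rightarrow> nat \<Rightarrow> nat \<Rightarrow> nat \<Rightarrow> real \<times> real \<Rightarrow> real \<times> real)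
   \<Rightarrow> nat \<Rightarrow> nat \<Rightarrow> nat \<Rightarrow> (nat \<Rightarrow> real \<times> real \<Rightarrow> real \<times> real) \<Rightarrow> bool" where
  "eq2 x y Nx Ny M A v S n i j w \<longleftrightarrow>
    (let vR = (\<lambda>l t. if Suc i < Nx then v n l (Suc i) j (x (Suc i), t) else 0);
         vL = (\<lambda>l t. if i = 0 then 0 else v n l i j (x i, t));
         vT = (\<lambda>l s. if Suc j < Ny then v n l i (Suc j) (s, y (Suc j)) else 0);
         vB = (\<lambda>l s. if j = 0 then 0 else v n l i j (s, y j)) in
     (\<Sum>k<M. integral (cell x y i j) (\<lambda>z. S n k i j z \<bullet> w k z))
   + (\<Sum>k<M. integral (cell x y i j)
        (\<lambda>z. (\<Sum>l<M. A i j k l z * v n l i j z) * dive (w k) z))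
   + (\<Sum>k<M. integral (cell x y i j)
        (\<lambda>z. (\<Sum>l<M. v n l i j z *\<^sub>R grad (A i j k l) z) \<bullet> w k z))
   - (\<Sum>k<M.
        integral {y j..y (Suc j)} (\<lambda>t. (\<Sum>l<M. A i j k l (x (Suc i), t) * vR l t)
                                        * fst (w k (x (Suc i), t)))
      - integral {y j..y (Suc j)} (\<lambda>t. (\<Sum>l<M. A i j k l (x i, t) * vL l t)
                                        * fst (w k (x i, t)))
      + integral {x i..x (Suc i)} (\<lambda>s. (\<Sum>l<M. A i j k l (s, y (Suc j)) * vT l s)
                                        * snd (w k (s, y (Suc j))))
      - integral {x i..x (Suc i)} (\<lambda>s. (\<Sum>l<M. A i j k l (s, y j) * vB l s)
                                        * snd (w k (s, y j))))
   = 0)"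

definition l2sq :: "(nat \<Rightarrow> real) \<Rightarrow> (nat \<Rightarrow> real) \<Rightarrow> nat \<Rightarrow> nat \<Rightarrow> nat
   \<Rightarrow> (nat \<Rightarrow> nat \<Rightarrow> nat \<Rightarrow> real \<times> real \<Rightarrow> 'a :: real_normed_vector) \<Rightarrow> real" where
  "l2sq x y Nx Ny M f = (\<Sum>i<Nx. \<Sum>j<Ny. \<Sum>k<M. integral (cell x y i j) (\<lambda>z. (norm (f k i j z))\<^sup>2))"

text \<open>Discrete energy E_h^n (for n >= 1).\<close>
definition energy :: "(nat \<Rightarrow> real) \<Rightarrow> (nat \<Rightarrow> real) \<Rightarrow> nat \<Rightarrow> nat \<Rightarrow> nat \<Rightarrow> real
   \<Rightarrow> (nat \<Rightarrow> nat \<Rightarrow> nat \<Rightarrow> nat \<Rightarrow> real \<times> real \<Rightarrow> real)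
   \<Rightarrow> (nat \<Rightarrow> nat \<Rightarrow> nat \<Rightarrow> nat \<Rightarrow> real \<times> real \<Rightarrow> real \<times> real) \<Rightarrow> nat \<Rightarrow> real" where
  "energy x y Nx Ny M dt v S n =
     l2sq x y Nx Ny M (\<lambda>k i j z. (v n k i j z - v (n - 1) k i j z) / dt)
   + l2sq x y Nx Ny M (\<lambda>k i j z. (1 / 2) *\<^sub>R (S n k i j z + S (n - 1) k i j z))
   - dt ^ 2 / 4 * l2sq x y Nx Ny M (\<lambda>k i j z. (1 / dt) *\<^sub>R (S n k i j z - S (n - 1) k i j z))"

end

theory Submission
  imports Defs
begin



lemma C1_simp: "Ck (Suc 0) f U \<longleftrightarrow> continuous_on U f \<and>
     (\<forall>z\<in>U. (\<lambda>s. f (s, snd z)) differentiable (at (fst z)) \<and>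
             (\<lambda>t. f (fst z, t)) differentiable (at (snd z))) \<and>
     continuous_on U (pdx f) \<and> continuous_on U (pdy f)"
  by simp

lemma C1_dx:
  assumes "Ck (Suc 0) f U" "z \<in> U"
  shows "((\<lambda>s. f (s, snd z)) has_real_derivative pdx f z) (at (fst z))"
  using assms unfolding C1_simp pdx_def
  by (simp add: DERIV_deriv_iff_real_differentiable)

lemma C1_dy:
  assumes "Ck (Suc 0) f U" "z \<in> U"
  shows "((\<lambda>t. f (fst z, t)) has_real_derivative pdy f z) (at (snd z))"
  using assms unfolding C1_simp pdy_def
  by (simp add: DERIV_deriv_iff_real_differentiable)

lemma pdx_mult:
  assumes "Ck (Suc 0) f U" "Ck (Suc 0) g U" "z \<in> U"
  shows "pdx (\<lambda>z. f z * g z) z = pdx f z * g z + f z * pdx g z"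
proof -
  have "((\<lambda>s. f (s, snd z) * g (s, snd z)) has_real_derivative
     pdx f z * g (fst z, snd z) + f (fst z, snd z) * pdx g z) (at (fst z))"
    using DERIV_mult[OF C1_dx[OF assms(1,3)] C1_dx[OF assms(2,3)]] by (simp add: algebra_simps)
  then show ?thesis unfolding pdx_def[of "\<lambda>z. f z * g z"] by (simp add: DERIV_imp_deriv)
qed

lemma pdy_mult:
  assumes "Ck (Suc 0) f U" "Ck (Suc 0) g U" "z \<in> U"
  shows "pdy (\<lambda>z. f z * g z) z = pdy f z * g z + f z * pdy g z"
proof -
  have "((\<lambda>t. f (fst z, t) * g (fst z, t)) has_real_derivative
     pdy f z * g (fst z, snd z) + f (fst z, snd z) * pdy g z) (at (snd z))"
    using DERIV_mult[OF C1_dy[OF assms(1,3)] C1_dy[OF assms(2,3)]] by (simp add: algebra_simps)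
  then show ?thesis unfolding pdy_def[of "\<lambda>z. f z * g z"] by (simp add: DERIV_imp_deriv)
qed

lemma C1_mult:
  assumes f: "Ck (Suc 0) f U" and g: "Ck (Suc 0) g U"
  shows "Ck (Suc 0) (\<lambda>z. f z * g z) U"
proof -
  have cf: "continuous_on U f" "continuous_on U (pdx f)" "continuous_on U (pdy f)"
    and cg: "continuous_on U g" "continuous_on U (pdx g)" "continuous_on U (pdy g)"
    using f g by auto
  have "continuous_on U (\<lambda>z. pdx f z * g z + f z * pdx g z)"
    by (intro continuous_intros cf cg)
  then have 1: "continuous_on U (pdx (\<lambda>z. f z * g z))"
    by (rule continuous_on_cong[THEN iffD1, rotated 2]) (auto simp: pdx_mult[OF f g])
  have "continuous_on U (\<lambda>z. pdy f z * g z + f z * pdy g z)"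
    by (intro continuous_intros cf cg)
  then have 2: "continuous_on U (pdy (\<lambda>z. f z * g z))"
    by (rule continuous_on_cong[THEN iffD1, rotated 2]) (auto simp: pdy_mult[OF f g])
  have 3: "\<forall>z\<in>U. (\<lambda>s. f (s, snd z) * g (s, snd z)) differentiable (at (fst z)) \<and>
             (\<lambda>t. f (fst z, t) * g (fst z, t)) differentiable (at (snd z))"
    using f g by (auto intro!: differentiable_mult)
  show ?thesis using 1 2 3 cf cg by (simp add: continuous_on_mult)
qed

lemma C1_subset: "Ck (Suc 0) f U \<Longrightarrow> V \<subseteq> U \<Longrightarrow> Ck (Suc 0) f V"
  by (auto intro: continuous_on_subset)

lemma poly2_C1:
  assumes "poly2 k f"
  shows "Ck (Suc 0) f U"
proof -
  obtain c where c: "\<And>a b. f (a, b) = (\<Sum>i\<le>k. \<Sum>j\<le>k - i. c i j * a ^ i * b ^ j)"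
    using assms unfolding poly2_def by blast
  have fe: "f = (\<lambda>z. \<Sum>i\<le>k. \<Sum>j\<le>k - i. c i j * fst z ^ i * snd z ^ j)"
    using c by (auto simp: fun_eq_iff)
  have dx: "((\<lambda>s. f (s, b)) has_real_derivative
       (\<Sum>i\<le>k. \<Sum>j\<le>k - i. c i j * (of_nat i * a ^ (i - 1)) * b ^ j)) (at a)" for a b
    unfolding c by (auto intro!: derivative_eq_intros sum.cong simp: mult_ac)
  have dy: "((\<lambda>t. f (a, t)) has_real_derivative
       (\<Sum>i\<le>k. \<Sum>j\<le>k - i. c i j * a ^ i * (of_nat j * b ^ (j - 1)))) (at b)" for a b
    unfolding c by (auto intro!: derivative_eq_intros sum.cong simp: mult_ac)
  have px: "pdx f = (\<lambda>z. \<Sum>i\<le>k. \<Sum>j\<le>k - i. c i j * (of_nat i * fst z ^ (i - 1)) * snd z ^ j)"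
    unfolding pdx_def using dx by (auto simp: fun_eq_iff DERIV_imp_deriv)
  have py: "pdy f = (\<lambda>z. \<Sum>i\<le>k. \<Sum>j\<le>k - i. c i j * fst z ^ i * (of_nat j * snd z ^ (j - 1)))"
    unfolding pdy_def using dy by (auto simp: fun_eq_iff DERIV_imp_deriv)
  have "continuous_on U f" unfolding fe by (intro continuous_intros)
  moreover have "continuous_on U (pdx f)" unfolding px by (intro continuous_intros)
  moreover have "continuous_on U (pdy f)" unfolding py by (intro continuous_intros)
  moreover have "\<forall>z\<in>U. (\<lambda>s. f (s, snd z)) differentiable (at (fst z)) \<and>
             (\<lambda>t. f (fst z, t)) differentiable (at (snd z))"
    using dx dy real_differentiable_def by blast
  ultimately show ?thesis by simp
qed




lemma div_x:
  assumes F: "Ck (Suc 0) F U" and sub: "cbox (a,b) (c,d) \<subseteq> U" and ab: "a \<le> c" "b \<le> d"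
  shows "integral (cbox (a,b) (c,d)) (pdx F) = integral {b..d} (\<lambda>t. F (c,t) - F (a,t))"
proof -
  have cont: "continuous_on (cbox (a,b) (c,d)) (pdx F)"
    using F sub by (auto intro: continuous_on_subset)
  have "integral (cbox (a,b) (c,d)) (pdx F) = integral (cbox a c) (\<lambda>s. integral (cbox b d) (\<lambda>t. pdx F (s,t)))"
    by (rule integral_prod_continuous[OF cont])
  also have "\<dots> = integral (cbox b d) (\<lambda>t. integral (cbox a c) (\<lambda>s. pdx F (s,t)))"
    by (rule integral_swap_continuous) (use cont in \<open>simp add: case_prod_beta'\<close>)
  also have "\<dots> = integral (cbox b d) (\<lambda>t. F (c,t) - F (a,t))"
  proof (rule integral_cong)
    fix t assume "t \<in> cbox b d"
    then have t: "b \<le> t" "t \<le> d" by auto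
    have "((\<lambda>s. pdx F (s,t)) has_integral (F (c,t) - F (a,t))) {a..c}"
    proof (rule fundamental_theorem_of_calculus[OF ab(1)])
      fix s assume "s \<in> {a..c}"
      then have "(s,t) \<in> U" using sub t by (auto simp: cbox_Pair_iff)
      from C1_dx[OF F this] show "((\<lambda>s. F (s, t)) has_vector_derivative pdx F (s, t)) (at s within {a..c})"
        by (simp add: has_real_derivative_iff_has_vector_derivative has_vector_derivative_at_within)
    qed
    then show "integral (cbox a c) (\<lambda>s. pdx F (s, t)) = F (c, t) - F (a, t)"
      by (simp add: integral_unique)
  qed
  finally show ?thesis by simp
qed

lemma div_y:
  assumes F: "Ck (Suc 0) F U" and sub: "cbox (a,b) (c,d) \<subseteq> U" and ab: "a \<le> c" "b \<le> d"
  shows "integral (cbox (a,b) (c,d)) (pdy F) = integral {a..c} (\<lambda>s. F (s,d) - F (s,b))"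
proof -
  have cont: "continuous_on (cbox (a,b) (c,d)) (pdy F)"
    using F sub by (auto intro: continuous_on_subset)
  have "integral (cbox (a,b) (c,d)) (pdy F) = integral (cbox a c) (\<lambda>s. integral (cbox b d) (\<lambda>t. pdy F (s,t)))"
    by (rule integral_prod_continuous[OF cont])
  also have "\<dots> = integral (cbox a c) (\<lambda>s. F (s,d) - F (s,b))"
  proof (rule integral_cong)
    fix s assume "s \<in> cbox a c"
    then have s: "a \<le> s" "s \<le> c" by auto
    have "((\<lambda>t. pdy F (s,t)) has_integral (F (s,d) - F (s,b))) {b..d}"
    proof (rule fundamental_theorem_of_calculus[OF ab(2)])
      fix t assume "t \<in> {b..d}"
      then have "(s,t) \<in> U" using sub s by (auto simp: cbox_Pair_iff)
      from C1_dy[OF F this] show "((\<lambda>t. F (s, t)) has_vector_derivative pdy F (s, t)) (at t within {b..d})"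
        by (simp add: has_real_derivative_iff_has_vector_derivative has_vector_derivative_at_within)
    qed
    then show "integral (cbox b d) (\<lambda>t. pdy F (s, t)) = F (s, d) - F (s, b)"
      by (simp add: integral_unique)
  qed
  finally show ?thesis by simp
qed




lemma sym_sum:
  fixes B :: "nat \<Rightarrow> nat \<Rightarrow> real"
  assumes "\<And>k l. k < M \<Longrightarrow> l < M \<Longrightarrow> B k l = B l k"
  shows "(\<Sum>k<M. \<Sum>l<M. B k l * X l * Y k) = (\<Sum>k<M. \<Sum>l<M. B k l * Y l * X k)"
proof -
  have "(\<Sum>k<M. \<Sum>l<M. B k l * X l * Y k) = (\<Sum>l<M. \<Sum>k<M. B k l * X l * Y k)"
    by (rule sum.swap)
  also have "\<dots> = (\<Sum>l<M. \<Sum>k<M. B l k * Y k * X l)"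
    using assms by (intro sum.cong refl) (auto simp: mult_ac)
  finally show ?thesis .
qed

lemma alg_id:
  fixes B :: "nat \<Rightarrow> nat \<Rightarrow> real"
  assumes "\<And>k l. k < M \<Longrightarrow> l < M \<Longrightarrow> B k l = B l k"
  shows "(\<Sum>k<M. (\<Sum>l<M. B k l * qa l) * px k + (\<Sum>l<M. B k l * qb l) * py k)
       + (\<Sum>k<M. (\<Sum>l<M. B k l * p l) * (dqa k + dqb k))
       + (\<Sum>k<M. (\<Sum>l<M. p l * ba k l) * qa k + (\<Sum>l<M. p l * bb k l) * qb k)
     = (\<Sum>k<M. \<Sum>l<M. ((ba k l * p l + B k l * px l) * qa k + B k l * p l * dqa k)
              + ((bb k l * p l + B k l * py l) * qb k + B k l * p l * dqb k))"
proof -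
  have s1: "(\<Sum>k<M. \<Sum>l<M. B k l * qa l * px k) = (\<Sum>k<M. \<Sum>l<M. B k l * px l * qa k)"
    by (rule sym_sum[OF assms])
  have s2: "(\<Sum>k<M. \<Sum>l<M. B k l * qb l * py k) = (\<Sum>k<M. \<Sum>l<M. B k l * py l * qb k)"
    by (rule sym_sum[OF assms])
  show ?thesis
    apply (simp add: sum_distrib_right sum_distrib_left sum.distrib algebra_simps)
    using s1 s2 apply (simp add: algebra_simps)
    done
qed




lemma edge_x_cont:
  fixes a b c d s :: real and h :: "real \<times> real \<Rightarrow> real"
  assumes "continuous_on (cbox (a,b) (c,d)) h" "a \<le> s" "s \<le> c"
  shows "continuous_on {b..d} (\<lambda>t. h (s,t))"
proof (rule continuous_on_compose2[OF assms(1)])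
  show "continuous_on {b..d} (\<lambda>u. (s, u))" by (intro continuous_intros)
qed (use assms in \<open>auto simp: cbox_Pair_iff\<close>)

lemma edge_y_cont:
  fixes a b c d t :: real and h :: "real \<times> real \<Rightarrow> real"
  assumes "continuous_on (cbox (a,b) (c,d)) h" "b \<le> t" "t \<le> d"
  shows "continuous_on {a..c} (\<lambda>s. h (s,t))"
proof (rule continuous_on_compose2[OF assms(1)])
  show "continuous_on {a..c} (\<lambda>u. (u, t))" by (intro continuous_intros)
qed (use assms in \<open>auto simp: cbox_Pair_iff\<close>)

lemma edge_x_int:
  fixes a b c d s :: real and h :: "real \<times> real \<Rightarrow> real"
  assumes "continuous_on (cbox (a,b) (c,d)) h" "a \<le> s" "s \<le> c"
  shows "(\<lambda>t. h (s,t)) integrable_on {b..d}"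
  by (rule integrable_continuous_interval[OF edge_x_cont[OF assms]])

lemma edge_y_int:
  fixes a b c d t :: real and h :: "real \<times> real \<Rightarrow> real"
  assumes "continuous_on (cbox (a,b) (c,d)) h" "b \<le> t" "t \<le> d"
  shows "(\<lambda>s. h (s,t)) integrable_on {a..c}"
  by (rule integrable_continuous_interval[OF edge_y_cont[OF assms]])





lemma cell_ibp:
  fixes B :: "nat \<Rightarrow> nat \<Rightarrow> real \<times> real \<Rightarrow> real" and P :: "nat \<Rightarrow> real \<times> real \<Rightarrow> real"
    and Q :: "nat \<Rightarrow> real \<times> real \<Rightarrow> real \<times> real"
  assumes K: "a \<le> c" "b \<le> d" "cbox (a,b) (c,d) \<subseteq> U"
  and CB: "\<And>k l. k<M \<Longrightarrow> l<M \<Longrightarrow> Ck (Suc 0) (B k l) U"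
  and CP: "\<And>k. k<M \<Longrightarrow> Ck (Suc 0) (P k) U"
  and CQ1: "\<And>k. k<M \<Longrightarrow> Ck (Suc 0) (\<lambda>z. fst (Q k z)) U"
  and CQ2: "\<And>k. k<M \<Longrightarrow> Ck (Suc 0) (\<lambda>z. snd (Q k z)) U"
  and sym: "\<And>k l z. k<M \<Longrightarrow> l<M \<Longrightarrow> z \<in> cbox (a,b) (c,d) \<Longrightarrow> B k l z = B l k z"
  shows "(\<Sum>k<M. integral (cbox (a,b) (c,d)) (\<lambda>z. (\<Sum>l<M. B k l z *\<^sub>R Q l z) \<bullet> grad (P k) z))
       + (\<Sum>k<M. integral (cbox (a,b) (c,d)) (\<lambda>z. (\<Sum>l<M. B k l z * P l z) * dive (Q k) z))
       + (\<Sum>k<M. integral (cbox (a,b) (c,d)) (\<lambda>z. (\<Sum>l<M. P l z *\<^sub>R grad (B k l) z) \<bullet> Q k z))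
     = (\<Sum>k<M. integral {b..d} (\<lambda>t. (\<Sum>l<M. B k l (c,t) * P l (c,t)) * fst (Q k (c,t)))
            - integral {b..d} (\<lambda>t. (\<Sum>l<M. B k l (a,t) * P l (a,t)) * fst (Q k (a,t)))
            + integral {a..c} (\<lambda>s. (\<Sum>l<M. B k l (s,d) * P l (s,d)) * snd (Q k (s,d)))
            - integral {a..c} (\<lambda>s. (\<Sum>l<M. B k l (s,b) * P l (s,b)) * snd (Q k (s,b))))"
proof -
  define K where "K = cbox (a,b) (c,d)"
  define q1 where "q1 k = (\<lambda>z. fst (Q k z))" for k
  define q2 where "q2 k = (\<lambda>z. snd (Q k z))" for k
  define F1 where "F1 k l = (\<lambda>z. (B k l z * P l z) * q1 k z)" for k l
  define F2 where "F2 k l = (\<lambda>z. (B k l z * P l z) * q2 k z)" for k l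
  have CF1: "Ck (Suc 0) (F1 k l) U" if "k<M" "l<M" for k l
    unfolding F1_def q1_def using that by (intro C1_mult CB CP CQ1)
  have CF2: "Ck (Suc 0) (F2 k l) U" if "k<M" "l<M" for k l
    unfolding F2_def q2_def using that by (intro C1_mult CB CP CQ2)
  have cU: "continuous_on K f \<and> continuous_on K (pdx f) \<and> continuous_on K (pdy f)"
    if "Ck (Suc 0) f U" for f
    using that K(3) unfolding K_def by (auto intro: continuous_on_subset)
  have cB: "continuous_on K (B k l)" "continuous_on K (pdx (B k l))" "continuous_on K (pdy (B k l))"
    if "k<M" "l<M" for k l using cU[OF CB[OF that]] by auto
  have cP: "continuous_on K (P k)" "continuous_on K (pdx (P k))" "continuous_on K (pdy (P k))"
    if "k<M" for k using cU[OF CP[OF that]] by auto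
  have cQ1: "continuous_on K (q1 k)" "continuous_on K (pdx (q1 k))" "continuous_on K (pdy (q1 k))"
    if "k<M" for k using cU[OF CQ1[OF that]] unfolding q1_def by auto
  have cQ2: "continuous_on K (q2 k)" "continuous_on K (pdx (q2 k))" "continuous_on K (pdy (q2 k))"
    if "k<M" for k using cU[OF CQ2[OF that]] unfolding q2_def by auto
  have cF1: "continuous_on K (F1 k l)" "continuous_on K (pdx (F1 k l))"
    if "k<M" "l<M" for k l using cU[OF CF1[OF that]] by auto
  have cF2: "continuous_on K (F2 k l)" "continuous_on K (pdy (F2 k l))"
    if "k<M" "l<M" for k l using cU[OF CF2[OF that]] by auto
  define e1 where "e1 k = (\<lambda>z. (\<Sum>l<M. B k l z * q1 l z) * pdx (P k) z + (\<Sum>l<M. B k l z * q2 l z) * pdy (P k) z)" for k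
  define e2 where "e2 k = (\<lambda>z. (\<Sum>l<M. B k l z * P l z) * (pdx (q1 k) z + pdy (q2 k) z))" for k
  define e3 where "e3 k = (\<lambda>z. (\<Sum>l<M. P l z * pdx (B k l) z) * q1 k z + (\<Sum>l<M. P l z * pdy (B k l) z) * q2 k z)" for k
  have E1: "(\<lambda>z. (\<Sum>l<M. B k l z *\<^sub>R Q l z) \<bullet> grad (P k) z) = e1 k" for k
    unfolding e1_def q1_def q2_def grad_def inner_prod_def by (rule ext) (simp add: fst_sum snd_sum)
  have E2: "(\<lambda>z. (\<Sum>l<M. B k l z * P l z) * dive (Q k) z) = e2 k" for k
    unfolding e2_def q1_def q2_def dive_def by simp
  have E3: "(\<lambda>z. (\<Sum>l<M. P l z *\<^sub>R grad (B k l) z) \<bullet> Q k z) = e3 k" for k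
    unfolding e3_def q1_def q2_def grad_def inner_prod_def by (rule ext) (simp add: fst_sum snd_sum)
  have ie1: "e1 k integrable_on K" if "k<M" for k
    unfolding K_def e1_def using that
    by (intro integrable_continuous) (auto intro!: continuous_intros cB cP cQ1 cQ2 simp: K_def[symmetric])
  have ie2: "e2 k integrable_on K" if "k<M" for k
    unfolding K_def e2_def using that
    by (intro integrable_continuous) (auto intro!: continuous_intros cB cP cQ1 cQ2 simp: K_def[symmetric])
  have ie3: "e3 k integrable_on K" if "k<M" for k
    unfolding K_def e3_def using that
    by (intro integrable_continuous) (auto intro!: continuous_intros cB cP cQ1 cQ2 simp: K_def[symmetric])
  have iF1: "pdx (F1 k l) integrable_on K" if "k<M" "l<M" for k l
    unfolding K_def by (rule integrable_continuous) (use cF1[OF that] in \<open>simp add: K_def\<close>)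
  have iF2: "pdy (F2 k l) integrable_on K" if "k<M" "l<M" for k l
    unfolding K_def by (rule integrable_continuous) (use cF2[OF that] in \<open>simp add: K_def\<close>)
  have pt: "(\<Sum>k<M. e1 k z) + (\<Sum>k<M. e2 k z) + (\<Sum>k<M. e3 k z)
      = (\<Sum>k<M. \<Sum>l<M. pdx (F1 k l) z + pdy (F2 k l) z)" if z: "z \<in> K" for z
  proof -
    have zU: "z \<in> U" using z K(3) unfolding K_def by auto
    have px1: "pdx (F1 k l) z = (pdx (B k l) z * P l z + B k l z * pdx (P l) z) * q1 k z
                 + B k l z * P l z * pdx (q1 k) z" if "k<M" "l<M" for k l
    proof -
      have "Ck (Suc 0) (\<lambda>z. B k l z * P l z) U" by (intro C1_mult CB CP that)
      from pdx_mult[OF this CQ1[OF that(1), folded q1_def] zU] pdx_mult[OF CB[OF that] CP[OF that(2)] zU]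
      show ?thesis unfolding F1_def by simp
    qed
    have py2: "pdy (F2 k l) z = (pdy (B k l) z * P l z + B k l z * pdy (P l) z) * q2 k z
                 + B k l z * P l z * pdy (q2 k) z" if "k<M" "l<M" for k l
    proof -
      have "Ck (Suc 0) (\<lambda>z. B k l z * P l z) U" by (intro C1_mult CB CP that)
      from pdy_mult[OF this CQ2[OF that(1), folded q2_def] zU] pdy_mult[OF CB[OF that] CP[OF that(2)] zU]
      show ?thesis unfolding F2_def by simp
    qed
    have "(\<Sum>k<M. \<Sum>l<M. pdx (F1 k l) z + pdy (F2 k l) z)
       = (\<Sum>k<M. \<Sum>l<M. ((pdx (B k l) z * P l z + B k l z * pdx (P l) z) * q1 k z + B k l z * P l z * pdx (q1 k) z)
              + ((pdy (B k l) z * P l z + B k l z * pdy (P l) z) * q2 k z + B k l z * P l z * pdy (q2 k) z))"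
      by (intro sum.cong refl) (simp add: px1 py2)
    also have "\<dots> = (\<Sum>k<M. e1 k z) + (\<Sum>k<M. e2 k z) + (\<Sum>k<M. e3 k z)"
      unfolding e1_def e2_def e3_def
      by (rule alg_id[where B="\<lambda>k l. B k l z" and qa="\<lambda>l. q1 l z" and qb="\<lambda>l. q2 l z"
            and px="\<lambda>k. pdx (P k) z" and py="\<lambda>k. pdy (P k) z" and p="\<lambda>l. P l z"
            and dqa="\<lambda>k. pdx (q1 k) z" and dqb="\<lambda>k. pdy (q2 k) z"
            and ba="\<lambda>k l. pdx (B k l) z" and bb="\<lambda>k l. pdy (B k l) z", symmetric])
         (use sym z in \<open>auto simp: K_def\<close>)
    finally show ?thesis by simp
  qed
  have RX: "integral {b..d} (\<lambda>t. (\<Sum>l<M. B k l (s,t) * P l (s,t)) * fst (Q k (s,t)))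
      = (\<Sum>l<M. integral {b..d} (\<lambda>t. F1 k l (s,t)))" if "k<M" "a \<le> s" "s \<le> c" for k s
  proof -
    have "integral {b..d} (\<lambda>t. (\<Sum>l<M. B k l (s,t) * P l (s,t)) * fst (Q k (s,t)))
        = integral {b..d} (\<lambda>t. \<Sum>l<M. F1 k l (s,t))"
      by (simp add: F1_def q1_def sum_distrib_right)
    also have "\<dots> = (\<Sum>l<M. integral {b..d} (\<lambda>t. F1 k l (s,t)))"
      by (rule integral_sum) (use cF1 that in \<open>auto intro!: edge_x_int simp: K_def\<close>)
    finally show ?thesis .
  qed
  have RY: "integral {a..c} (\<lambda>s. (\<Sum>l<M. B k l (s,t) * P l (s,t)) * snd (Q k (s,t)))
      = (\<Sum>l<M. integral {a..c} (\<lambda>s. F2 k l (s,t)))" if "k<M" "b \<le> t" "t \<le> d" for k t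
  proof -
    have "integral {a..c} (\<lambda>s. (\<Sum>l<M. B k l (s,t) * P l (s,t)) * snd (Q k (s,t)))
        = integral {a..c} (\<lambda>s. \<Sum>l<M. F2 k l (s,t))"
      by (simp add: F2_def q2_def sum_distrib_right)
    also have "\<dots> = (\<Sum>l<M. integral {a..c} (\<lambda>s. F2 k l (s,t)))"
      by (rule integral_sum) (use cF2 that in \<open>auto intro!: edge_y_int simp: K_def\<close>)
    finally show ?thesis .
  qed
  have DX: "integral K (pdx (F1 k l)) = integral {b..d} (\<lambda>t. F1 k l (c,t)) - integral {b..d} (\<lambda>t. F1 k l (a,t))"
    if "k<M" "l<M" for k l
  proof -
    have "integral K (pdx (F1 k l)) = integral {b..d} (\<lambda>t. F1 k l (c,t) - F1 k l (a,t))"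
      unfolding K_def by (rule div_x[OF CF1[OF that] K(3) K(1,2)])
    also have "\<dots> = integral {b..d} (\<lambda>t. F1 k l (c,t)) - integral {b..d} (\<lambda>t. F1 k l (a,t))"
      by (rule integral_diff) (use cF1[OF that] K in \<open>auto intro!: edge_x_int simp: K_def\<close>)
    finally show ?thesis .
  qed
  have DY: "integral K (pdy (F2 k l)) = integral {a..c} (\<lambda>s. F2 k l (s,d)) - integral {a..c} (\<lambda>s. F2 k l (s,b))"
    if "k<M" "l<M" for k l
  proof -
    have "integral K (pdy (F2 k l)) = integral {a..c} (\<lambda>s. F2 k l (s,d) - F2 k l (s,b))"
      unfolding K_def by (rule div_y[OF CF2[OF that] K(3) K(1,2)])
    also have "\<dots> = integral {a..c} (\<lambda>s. F2 k l (s,d)) - integral {a..c} (\<lambda>s. F2 k l (s,b))"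
      by (rule integral_diff) (use cF2[OF that] K in \<open>auto intro!: edge_y_int simp: K_def\<close>)
    finally show ?thesis .
  qed
  have "?thesis \<longleftrightarrow> (\<Sum>k<M. integral K (e1 k)) + (\<Sum>k<M. integral K (e2 k)) + (\<Sum>k<M. integral K (e3 k))
     = (\<Sum>k<M. (\<Sum>l<M. integral {b..d} (\<lambda>t. F1 k l (c,t))) - (\<Sum>l<M. integral {b..d} (\<lambda>t. F1 k l (a,t)))
          + (\<Sum>l<M. integral {a..c} (\<lambda>s. F2 k l (s,d))) - (\<Sum>l<M. integral {a..c} (\<lambda>s. F2 k l (s,b))))"
    unfolding E1 E2 E3 K_def[symmetric]
    by (intro arg_cong2[where f="(=)"] refl sum.cong) (use K in \<open>simp_all add: RX RY\<close>)
  also have "\<dots> \<longleftrightarrow> True"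
  proof -
    have "(\<Sum>k<M. integral K (e1 k)) + (\<Sum>k<M. integral K (e2 k)) + (\<Sum>k<M. integral K (e3 k))
        = integral K (\<lambda>z. (\<Sum>k<M. e1 k z) + (\<Sum>k<M. e2 k z) + (\<Sum>k<M. e3 k z))"
    proof -
      have i1: "(\<lambda>z. \<Sum>k<M. e1 k z) integrable_on K" by (rule integrable_sum) (auto intro: ie1)
      have i2: "(\<lambda>z. \<Sum>k<M. e2 k z) integrable_on K" by (rule integrable_sum) (auto intro: ie2)
      have i3: "(\<lambda>z. \<Sum>k<M. e3 k z) integrable_on K" by (rule integrable_sum) (auto intro: ie3)
      have s1: "integral K (\<lambda>z. \<Sum>k<M. e1 k z) = (\<Sum>k<M. integral K (e1 k))" by (rule integral_sum) (auto intro: ie1)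
      have s2: "integral K (\<lambda>z. \<Sum>k<M. e2 k z) = (\<Sum>k<M. integral K (e2 k))" by (rule integral_sum) (auto intro: ie2)
      have s3: "integral K (\<lambda>z. \<Sum>k<M. e3 k z) = (\<Sum>k<M. integral K (e3 k))" by (rule integral_sum) (auto intro: ie3)
      show ?thesis
        by (subst integral_add[OF integrable_add[OF i1 i2] i3], subst integral_add[OF i1 i2]) (simp add: s1 s2 s3)
    qed
    also have "\<dots> = integral K (\<lambda>z. \<Sum>k<M. \<Sum>l<M. pdx (F1 k l) z + pdy (F2 k l) z)"
      by (rule integral_cong) (rule pt)
    also have "\<dots> = (\<Sum>k<M. \<Sum>l<M. integral K (pdx (F1 k l)) + integral K (pdy (F2 k l)))"
    proof -
      have ik: "(\<lambda>z. \<Sum>l<M. pdx (F1 k l) z + pdy (F2 k l) z) integrable_on K" if "k<M" for k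
        by (rule integrable_sum) (use that in \<open>auto intro!: integrable_add iF1 iF2\<close>)
      have "integral K (\<lambda>z. \<Sum>k<M. \<Sum>l<M. pdx (F1 k l) z + pdy (F2 k l) z)
          = (\<Sum>k<M. integral K (\<lambda>z. \<Sum>l<M. pdx (F1 k l) z + pdy (F2 k l) z))"
        by (rule integral_sum) (auto intro: ik)
      also have "\<dots> = (\<Sum>k<M. \<Sum>l<M. integral K (\<lambda>z. pdx (F1 k l) z + pdy (F2 k l) z))"
        by (intro sum.cong refl integral_sum) (auto intro!: integrable_add iF1 iF2)
      also have "\<dots> = (\<Sum>k<M. \<Sum>l<M. integral K (pdx (F1 k l)) + integral K (pdy (F2 k l)))"
        by (intro sum.cong refl integral_add) (auto intro!: iF1 iF2)
      finally show ?thesis .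
    qed
    also have "\<dots> = (\<Sum>k<M. (\<Sum>l<M. integral {b..d} (\<lambda>t. F1 k l (c,t))) - (\<Sum>l<M. integral {b..d} (\<lambda>t. F1 k l (a,t)))
          + (\<Sum>l<M. integral {a..c} (\<lambda>s. F2 k l (s,d))) - (\<Sum>l<M. integral {a..c} (\<lambda>s. F2 k l (s,b))))"
      by (intro sum.cong refl) (simp add: DX DY sum.distrib sum_subtractf)
    finally show ?thesis by simp
  qed
  finally show ?thesis by simp
qed




definition EF :: "nat \<Rightarrow> real set \<Rightarrow> (nat \<Rightarrow> nat \<Rightarrow> real \<Rightarrow> real) \<Rightarrow> (nat \<Rightarrow> real \<Rightarrow> real) \<Rightarrow> (nat \<Rightarrow> real \<Rightarrow> real) \<Rightarrow> real" where
  "EF M I B f g = (\<Sum>k<M. integral I (\<lambda>t. (\<Sum>l<M. B k l t * f l t) * g k t))"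

lemma EF_sym:
  fixes B :: "nat \<Rightarrow> nat \<Rightarrow> real \<Rightarrow> real"
  assumes cB: "\<And>k l. k<M \<Longrightarrow> l<M \<Longrightarrow> continuous_on {a..b} (B k l)"
    and cf: "\<And>l. l<M \<Longrightarrow> continuous_on {a..b} (f l)"
    and cg: "\<And>k. k<M \<Longrightarrow> continuous_on {a..b} (g k)"
    and sym: "\<And>k l t. k<M \<Longrightarrow> l<M \<Longrightarrow> t \<in> {a..b} \<Longrightarrow> B k l t = B l k t"
  shows "EF M {a..b} B f g = EF M {a..b} B g f"
proof -
  have "EF M {a..b} B f g = integral {a..b} (\<lambda>t. \<Sum>k<M. (\<Sum>l<M. B k l t * f l t) * g k t)"
    unfolding EF_def
    by (rule integral_sum[symmetric]) (auto intro!: integrable_continuous_interval continuous_intros cB cf cg)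
  also have "\<dots> = integral {a..b} (\<lambda>t. \<Sum>k<M. (\<Sum>l<M. B k l t * g l t) * f k t)"
  proof (rule integral_cong)
    fix t assume t: "t \<in> {a..b}"
    have "(\<Sum>k<M. \<Sum>l<M. B k l t * f l t * g k t) = (\<Sum>k<M. \<Sum>l<M. B k l t * g l t * f k t)"
      by (rule sym_sum) (use sym t in auto)
    then show "(\<Sum>k<M. (\<Sum>l<M. B k l t * f l t) * g k t) = (\<Sum>k<M. (\<Sum>l<M. B k l t * g l t) * f k t)"
      by (simp add: sum_distrib_right)
  qed
  also have "\<dots> = EF M {a..b} B g f"
    unfolding EF_def
    by (rule integral_sum) (auto intro!: integrable_continuous_interval continuous_intros cB cf cg)
  finally show ?thesis .
qed

lemma EF_zero: "EF M I B (\<lambda>l t. 0) g = 0"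
  unfolding EF_def by simp

lemma eq1_EF:
  "eq1 x y M dt A v S n i j p \<longleftrightarrow>
    (\<Sum>k<M. integral (cell x y i j)
        (\<lambda>z. (v (Suc n) k i j z - 2 * v n k i j z + v (n - 1) k i j z) / dt ^ 2 * p k z))
   + (\<Sum>k<M. integral (cell x y i j)
        (\<lambda>z. (\<Sum>l<M. A i j k l z *\<^sub>R S n l i j z) \<bullet> grad (p k) z))
   - (EF M {y j..y (Suc j)} (\<lambda>k l t. A i j k l (x (Suc i), t)) (\<lambda>l t. fst (S n l i j (x (Suc i), t))) (\<lambda>k t. p k (x (Suc i), t))
    - EF M {y j..y (Suc j)} (\<lambda>k l t. A (if i = 0 then i else i - 1) j k l (x i, t))
         (\<lambda>l t. fst (S n l (if i = 0 then i else i - 1) j (x i, t))) (\<lambda>k t. p k (x i, t))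
    + EF M {x i..x (Suc i)} (\<lambda>k l s. A i j k l (s, y (Suc j))) (\<lambda>l s. snd (S n l i j (s, y (Suc j)))) (\<lambda>k s. p k (s, y (Suc j)))
    - EF M {x i..x (Suc i)} (\<lambda>k l s. A i (if j = 0 then j else j - 1) k l (s, y j))
         (\<lambda>l s. snd (S n l i (if j = 0 then j else j - 1) (s, y j))) (\<lambda>k s. p k (s, y j)))
   = 0"
  unfolding eq1_def Let_def EF_def by (simp add: sum_subtractf sum.distrib)

lemma eq2_EF:
  "eq2 x y Nx Ny M A v S n i j w \<longleftrightarrow>
     (\<Sum>k<M. integral (cell x y i j) (\<lambda>z. S n k i j z \<bullet> w k z))
   + (\<Sum>k<M. integral (cell x y i j)
        (\<lambda>z. (\<Sum>l<M. A i j k l z * v n l i j z) * dive (w k) z))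
   + (\<Sum>k<M. integral (cell x y i j)
        (\<lambda>z. (\<Sum>l<M. v n l i j z *\<^sub>R grad (A i j k l) z) \<bullet> w k z))
   - (EF M {y j..y (Suc j)} (\<lambda>k l t. A i j k l (x (Suc i), t))
         (\<lambda>l t. if Suc i < Nx then v n l (Suc i) j (x (Suc i), t) else 0) (\<lambda>k t. fst (w k (x (Suc i), t)))
    - EF M {y j..y (Suc j)} (\<lambda>k l t. A i j k l (x i, t))
         (\<lambda>l t. if i = 0 then 0 else v n l i j (x i, t)) (\<lambda>k t. fst (w k (x i, t)))
    + EF M {x i..x (Suc i)} (\<lambda>k l s. A i j k l (s, y (Suc j)))
         (\<lambda>l s. if Suc j < Ny then v n l i (Suc j) (s, y (Suc j)) else 0) (\<lambda>k s. snd (w k (s, y (Suc j))))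
    - EF M {x i..x (Suc i)} (\<lambda>k l s. A i j k l (s, y j))
         (\<lambda>l s. if j = 0 then 0 else v n l i j (s, y j)) (\<lambda>k s. snd (w k (s, y j))))
   = 0"
  unfolding eq2_def Let_def EF_def by (simp add: sum_subtractf sum.distrib)

lemma tele:
  "(\<Sum>i<N. (if i = 0 then 0 else g i) - (if Suc i < N then g (Suc i) else 0)) = (0::real)"
proof (cases N)
  case 0 then show ?thesis by simp
next
  case (Suc m)
  have "(\<Sum>i<Suc m. (if i = 0 then 0 else g i)) = (\<Sum>i<m. g (Suc i))"
    by (subst sum.lessThan_Suc_shift) simp
  moreover have "(\<Sum>i<Suc m. (if Suc i < Suc m then g (Suc i) else 0)) = (\<Sum>i<m. g (Suc i))"
    by (simp add: sum.lessThan_Suc)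
  ultimately show ?thesis using Suc by (simp add: sum_subtractf)
qed




lemma poly2_cont: "poly2 k f \<Longrightarrow> continuous_on S f"
  using poly2_C1[of k f S] by simp

lemma EF_sym_x:
  fixes a b c d s :: real
  assumes "a \<le> s" "s \<le> c"
    and cB: "\<And>k l. k<M \<Longrightarrow> l<M \<Longrightarrow> continuous_on (cbox (a,b) (c,d)) (B k l)"
    and cP: "\<And>l. l<M \<Longrightarrow> continuous_on UNIV (P l)"
    and cQ: "\<And>k. k<M \<Longrightarrow> continuous_on UNIV (Q k)"
    and sym: "\<And>k l z. k<M \<Longrightarrow> l<M \<Longrightarrow> z \<in> cbox (a,b) (c,d) \<Longrightarrow> B k l z = B l k z"
  shows "EF M {b..d} (\<lambda>k l t. B k l (s,t)) (\<lambda>l t. P l (s,t)) (\<lambda>k t. Q k (s,t))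
       = EF M {b..d} (\<lambda>k l t. B k l (s,t)) (\<lambda>l t. Q l (s,t)) (\<lambda>k t. P k (s,t))"
proof (rule EF_sym)
  fix k l assume "k<M" "l<M"
  then show "continuous_on {b..d} (\<lambda>t. B k l (s, t))" using edge_x_cont[OF cB] assms(1,2) by blast
next
  fix l assume "l<M"
  then show "continuous_on {b..d} (\<lambda>t. P l (s, t))"
    by (intro continuous_on_compose2[OF cP[of l]]) (auto intro!: continuous_intros)
next
  fix k assume "k<M"
  then show "continuous_on {b..d} (\<lambda>t. Q k (s, t))"
    by (intro continuous_on_compose2[OF cQ[of k]]) (auto intro!: continuous_intros)
next
  fix k l t assume "k<M" "l<M" "t \<in> {b..d}"
  then show "B k l (s, t) = B l k (s, t)" using sym assms(1,2) by (auto simp: cbox_Pair_iff)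
qed

lemma EF_sym_y:
  fixes a b c d t :: real
  assumes "b \<le> t" "t \<le> d"
    and cB: "\<And>k l. k<M \<Longrightarrow> l<M \<Longrightarrow> continuous_on (cbox (a,b) (c,d)) (B k l)"
    and cP: "\<And>l. l<M \<Longrightarrow> continuous_on UNIV (P l)"
    and cQ: "\<And>k. k<M \<Longrightarrow> continuous_on UNIV (Q k)"
    and sym: "\<And>k l z. k<M \<Longrightarrow> l<M \<Longrightarrow> z \<in> cbox (a,b) (c,d) \<Longrightarrow> B k l z = B l k z"
  shows "EF M {a..c} (\<lambda>k l s. B k l (s,t)) (\<lambda>l s. P l (s,t)) (\<lambda>k s. Q k (s,t))
       = EF M {a..c} (\<lambda>k l s. B k l (s,t)) (\<lambda>l s. Q l (s,t)) (\<lambda>k s. P k (s,t))"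
proof (rule EF_sym)
  fix k l assume "k<M" "l<M"
  then show "continuous_on {a..c} (\<lambda>s. B k l (s, t))" using edge_y_cont[OF cB] assms(1,2) by blast
next
  fix l assume "l<M"
  then show "continuous_on {a..c} (\<lambda>s. P l (s, t))"
    by (intro continuous_on_compose2[OF cP[of l]]) (auto intro!: continuous_intros)
next
  fix k assume "k<M"
  then show "continuous_on {a..c} (\<lambda>s. Q k (s, t))"
    by (intro continuous_on_compose2[OF cQ[of k]]) (auto intro!: continuous_intros)
next
  fix k l s assume "k<M" "l<M" "s \<in> {a..c}"
  then show "B k l (s, t) = B l k (s, t)" using sym assms(1,2) by (auto simp: cbox_Pair_iff)
qed




lemma six:
  fixes a1 a2 a3 b1 b2 b3 c1 c2 c3 c4 :: "real \<times> real \<Rightarrow> real"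
  assumes "a1 integrable_on K" "a2 integrable_on K" "a3 integrable_on K"
    "b1 integrable_on K" "b2 integrable_on K" "b3 integrable_on K"
    "c1 integrable_on K" "c2 integrable_on K" "c3 integrable_on K" "c4 integrable_on K"
    and pt: "\<And>z. z \<in> K \<Longrightarrow> a1 z + a2 z - c * a3 z - (b1 z + b2 z - c * b3 z) = c1 z + c2 z - (c3 z + c4 z)"
  shows "integral K a1 + integral K a2 - c * integral K a3 - (integral K b1 + integral K b2 - c * integral K b3)
       = integral K c1 + integral K c2 - (integral K c3 + integral K c4)"
proof -
  have A: "((\<lambda>z. a1 z + a2 z - c * a3 z - (b1 z + b2 z - c * b3 z)) has_integral
     (integral K a1 + integral K a2 - c * integral K a3 - (integral K b1 + integral K b2 - c * integral K b3))) K"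
    by (intro has_integral_add has_integral_diff has_integral_mult_right integrable_integral assms)
  have C: "((\<lambda>z. c1 z + c2 z - (c3 z + c4 z)) has_integral
     (integral K c1 + integral K c2 - (integral K c3 + integral K c4))) K"
    by (intro has_integral_add has_integral_diff integrable_integral assms)
  have "integral K (\<lambda>z. a1 z + a2 z - c * a3 z - (b1 z + b2 z - c * b3 z)) = integral K (\<lambda>z. c1 z + c2 z - (c3 z + c4 z))"
    by (rule integral_cong) (rule pt)
  then show ?thesis using integral_unique[OF A] integral_unique[OF C] by simp
qed

lemma ptS:
  fixes P Q :: "real \<times> real" and dt :: real
  assumes "dt \<noteq> 0"
  shows "(norm ((1 / 2) *\<^sub>R (P + Q)))\<^sup>2 - dt ^ 2 / 4 * (norm ((1 / dt) *\<^sub>R (P - Q)))\<^sup>2 = P \<bullet> Q"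
  using assms unfolding power2_norm_eq_inner
  by (simp add: inner_add_left inner_add_right inner_diff_left inner_diff_right
      inner_commute[of Q P] field_simps power2_eq_square)

lemma ptV:
  fixes a b c dt :: real
  assumes "dt \<noteq> 0"
  shows "(norm ((a - b) / dt))\<^sup>2 - (norm ((b - c) / dt))\<^sup>2 = (a - 2 * b + c) / dt ^ 2 * a - (a - 2 * b + c) / dt ^ 2 * c"
  using assms by (simp add: power_divide field_simps power2_eq_square)

lemma cont_pair: "continuous_on K (\<lambda>z. fst (f z)) \<Longrightarrow> continuous_on K (\<lambda>z. snd (f z)) \<Longrightarrow> continuous_on K f"
  using continuous_on_Pair[of K "\<lambda>z. fst (f z)" "\<lambda>z. snd (f z)"] by simp




declare Ck.simps(2)[simp del]

lemma cell_key:
  fixes x y :: "nat \<Rightarrow> real" and A :: "nat \<Rightarrow> nat \<Rightarrow> nat \<Rightarrow> nat \<Rightarrow> real \<times> real \<Rightarrow> real"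
    and V :: "nat \<Rightarrow> nat \<Rightarrow> nat \<Rightarrow> real \<times> real \<Rightarrow> real"
    and SS :: "nat \<Rightarrow> nat \<Rightarrow> nat \<Rightarrow> real \<times> real \<Rightarrow> real \<times> real"
  assumes ij: "i < Nx" "j < Ny"
    and xmono: "\<forall>i<Nx. x i < x (Suc i)" and ymono: "\<forall>j<Ny. y j < y (Suc j)"
    and A_smooth: "\<forall>i<Nx. \<forall>j<Ny. \<forall>k<M. \<forall>l<M. smooth_near (A i j k l) (cell x y i j)"
    and A_sym: "\<forall>i<Nx. \<forall>j<Ny. \<forall>k<M. \<forall>l<M. \<forall>z\<in>cell x y i j. A i j k l z = A i j l k z"
    and V_sp: "\<forall>k<M. \<forall>i<Nx. \<forall>j<Ny. poly2 deg (V k i j)"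
    and S_sp: "\<forall>k<M. \<forall>i<Nx. \<forall>j<Ny. poly2 deg (\<lambda>z. fst (SS k i j z)) \<and> poly2 deg (\<lambda>z. snd (SS k i j z))"
  shows "(\<Sum>k<M. integral (cell x y i j) (\<lambda>z. (\<Sum>l<M. A i j k l z *\<^sub>R SS l i j z) \<bullet> grad (V k i j) z))
   - (EF M {y j..y (Suc j)} (\<lambda>k l t. A i j k l (x (Suc i), t)) (\<lambda>l t. fst (SS l i j (x (Suc i), t))) (\<lambda>k t. V k i j (x (Suc i), t))
    - EF M {y j..y (Suc j)} (\<lambda>k l t. A (if i = 0 then i else i - 1) j k l (x i, t))
         (\<lambda>l t. fst (SS l (if i = 0 then i else i - 1) j (x i, t))) (\<lambda>k t. V k i j (x i, t))
    + EF M {x i..x (Suc i)} (\<lambda>k l s. A i j k l (s, y (Suc j))) (\<lambda>l s. snd (SS l i j (s, y (Suc j)))) (\<lambda>k s. V k i j (s, y (Suc j)))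
    - EF M {x i..x (Suc i)} (\<lambda>k l s. A i (if j = 0 then j else j - 1) k l (s, y j))
         (\<lambda>l s. snd (SS l i (if j = 0 then j else j - 1) (s, y j))) (\<lambda>k s. V k i j (s, y j)))
   + ((\<Sum>k<M. integral (cell x y i j) (\<lambda>z. (\<Sum>l<M. A i j k l z * V l i j z) * dive (SS k i j) z))
   + (\<Sum>k<M. integral (cell x y i j) (\<lambda>z. (\<Sum>l<M. V l i j z *\<^sub>R grad (A i j k l) z) \<bullet> SS k i j z))
   - (EF M {y j..y (Suc j)} (\<lambda>k l t. A i j k l (x (Suc i), t))
         (\<lambda>l t. if Suc i < Nx then V l (Suc i) j (x (Suc i), t) else 0) (\<lambda>k t. fst (SS k i j (x (Suc i), t)))
    - EF M {y j..y (Suc j)} (\<lambda>k l t. A i j k l (x i, t))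
         (\<lambda>l t. if i = 0 then 0 else V l i j (x i, t)) (\<lambda>k t. fst (SS k i j (x i, t)))
    + EF M {x i..x (Suc i)} (\<lambda>k l s. A i j k l (s, y (Suc j)))
         (\<lambda>l s. if Suc j < Ny then V l i (Suc j) (s, y (Suc j)) else 0) (\<lambda>k s. snd (SS k i j (s, y (Suc j))))
    - EF M {x i..x (Suc i)} (\<lambda>k l s. A i j k l (s, y j))
         (\<lambda>l s. if j = 0 then 0 else V l i j (s, y j)) (\<lambda>k s. snd (SS k i j (s, y j)))))
  = ((if i = 0 then 0 else EF M {y j..y (Suc j)} (\<lambda>k l t. A (i - 1) j k l (x i, t))
           (\<lambda>l t. fst (SS l (i - 1) j (x i, t))) (\<lambda>k t. V k i j (x i, t)))
     - (if Suc i < Nx then EF M {y j..y (Suc j)} (\<lambda>k l t. A i j k l (x (Suc i), t))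
           (\<lambda>l t. fst (SS l i j (x (Suc i), t))) (\<lambda>k t. V k (Suc i) j (x (Suc i), t)) else 0))
   + ((if j = 0 then 0 else EF M {x i..x (Suc i)} (\<lambda>k l s. A i (j - 1) k l (s, y j))
           (\<lambda>l s. snd (SS l i (j - 1) (s, y j))) (\<lambda>k s. V k i j (s, y j)))
     - (if Suc j < Ny then EF M {x i..x (Suc i)} (\<lambda>k l s. A i j k l (s, y (Suc j)))
           (\<lambda>l s. snd (SS l i j (s, y (Suc j)))) (\<lambda>k s. V k i (Suc j) (s, y (Suc j))) else 0))"
proof -
  let ?K = "cbox (x i, y j) (x (Suc i), y (Suc j))"
  have xl: "x i \<le> x (Suc i)" and yl: "y j \<le> y (Suc j)" using xmono ymono ij by (auto intro: less_imp_le)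
  have ex: "\<exists>U. ?K \<subseteq> U \<and> Ck (Suc 0) (A i j k l) U" if "k<M" "l<M" for k l
  proof -
    have "smooth_near (A i j k l) (cell x y i j)" using A_smooth ij that by blast
    then obtain U where U: "cell x y i j \<subseteq> U" "\<forall>n. Ck n (A i j k l) U" unfolding smooth_near_def by blast
    have "Ck (Suc 0) (A i j k l) U" using U(2) by (rule spec)
    with U(1) show ?thesis unfolding cell_def by blast
  qed
  define F where "F k l = (SOME U. ?K \<subseteq> U \<and> Ck (Suc 0) (A i j k l) U)" for k l
  have F: "?K \<subseteq> F k l \<and> Ck (Suc 0) (A i j k l) (F k l)" if "k<M" "l<M" for k l
    unfolding F_def by (rule someI_ex[OF ex[OF that]])
  define U where "U = ?K \<inter> (\<Inter>k\<in>{..<M}. \<Inter>l\<in>{..<M}. F k l)"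
  have KU: "?K \<subseteq> U" unfolding U_def using F by blast
  have CB: "Ck (Suc 0) (A i j k l) U" if "k<M" "l<M" for k l
  proof (rule C1_subset)
    show "Ck (Suc 0) (A i j k l) (F k l)" using F[OF that] by blast
    show "U \<subseteq> F k l" unfolding U_def using that by blast
  qed
  have cB: "continuous_on ?K (A i j k l)" if "k<M" "l<M" for k l
    using CB[OF that] KU unfolding C1_simp by (auto intro: continuous_on_subset)
  have symK: "A i j k l z = A i j l k z" if "k<M" "l<M" "z \<in> ?K" for k l z
    using A_sym ij that unfolding cell_def by blast
  have pV: "poly2 deg (V k i' j')" if "k<M" "i'<Nx" "j'<Ny" for k i' j' using V_sp that by blast
  have pS1: "poly2 deg (\<lambda>z. fst (SS k i' j' z))" if "k<M" "i'<Nx" "j'<Ny" for k i' j' using S_sp that by blast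
  have pS2: "poly2 deg (\<lambda>z. snd (SS k i' j' z))" if "k<M" "i'<Nx" "j'<Ny" for k i' j' using S_sp that by blast
  have ibp0: "(\<Sum>k<M. integral ?K (\<lambda>z. (\<Sum>l<M. A i j k l z *\<^sub>R SS l i j z) \<bullet> grad (V k i j) z))
       + (\<Sum>k<M. integral ?K (\<lambda>z. (\<Sum>l<M. A i j k l z * V l i j z) * dive (SS k i j) z))
       + (\<Sum>k<M. integral ?K (\<lambda>z. (\<Sum>l<M. V l i j z *\<^sub>R grad (A i j k l) z) \<bullet> SS k i j z))
     = (\<Sum>k<M. integral {y j..y (Suc j)} (\<lambda>t. (\<Sum>l<M. A i j k l (x (Suc i), t) * V l i j (x (Suc i), t)) * fst (SS k i j (x (Suc i), t)))
            - integral {y j..y (Suc j)} (\<lambda>t. (\<Sum>l<M. A i j k l (x i, t) * V l i j (x i, t)) * fst (SS k i j (x i, t)))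
            + integral {x i..x (Suc i)} (\<lambda>s. (\<Sum>l<M. A i j k l (s, y (Suc j)) * V l i j (s, y (Suc j))) * snd (SS k i j (s, y (Suc j))))
            - integral {x i..x (Suc i)} (\<lambda>s. (\<Sum>l<M. A i j k l (s, y j) * V l i j (s, y j)) * snd (SS k i j (s, y j))))"
    by (rule cell_ibp[OF xl yl KU])
       (auto intro!: CB poly2_C1[OF pV] poly2_C1[OF pS1] poly2_C1[OF pS2] symK simp: ij)
  have ibp: "(\<Sum>k<M. integral ?K (\<lambda>z. (\<Sum>l<M. A i j k l z *\<^sub>R SS l i j z) \<bullet> grad (V k i j) z))
       + (\<Sum>k<M. integral ?K (\<lambda>z. (\<Sum>l<M. A i j k l z * V l i j z) * dive (SS k i j) z))
       + (\<Sum>k<M. integral ?K (\<lambda>z. (\<Sum>l<M. V l i j z *\<^sub>R grad (A i j k l) z) \<bullet> SS k i j z))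
     = EF M {y j..y (Suc j)} (\<lambda>k l t. A i j k l (x (Suc i), t)) (\<lambda>l t. V l i j (x (Suc i), t)) (\<lambda>k t. fst (SS k i j (x (Suc i), t)))
     - EF M {y j..y (Suc j)} (\<lambda>k l t. A i j k l (x i, t)) (\<lambda>l t. V l i j (x i, t)) (\<lambda>k t. fst (SS k i j (x i, t)))
     + EF M {x i..x (Suc i)} (\<lambda>k l s. A i j k l (s, y (Suc j))) (\<lambda>l s. V l i j (s, y (Suc j))) (\<lambda>k s. snd (SS k i j (s, y (Suc j))))
     - EF M {x i..x (Suc i)} (\<lambda>k l s. A i j k l (s, y j)) (\<lambda>l s. V l i j (s, y j)) (\<lambda>k s. snd (SS k i j (s, y j)))"
    unfolding ibp0 EF_def by (simp add: sum_subtractf sum.distrib)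
  have symX: "EF M {y j..y (Suc j)} (\<lambda>k l t. A i j k l (s, t)) (\<lambda>l t. P l (s, t)) (\<lambda>k t. Q k (s, t))
      = EF M {y j..y (Suc j)} (\<lambda>k l t. A i j k l (s, t)) (\<lambda>l t. Q l (s, t)) (\<lambda>k t. P k (s, t))"
    if "x i \<le> s" "s \<le> x (Suc i)" "\<And>l. l<M \<Longrightarrow> continuous_on UNIV (P l)" "\<And>k. k<M \<Longrightarrow> continuous_on UNIV (Q k)"
    for s P Q
    by (rule EF_sym_x[OF that(1,2) cB that(3,4) symK])
  have symY: "EF M {x i..x (Suc i)} (\<lambda>k l s. A i j k l (s, t)) (\<lambda>l s. P l (s, t)) (\<lambda>k s. Q k (s, t))
      = EF M {x i..x (Suc i)} (\<lambda>k l s. A i j k l (s, t)) (\<lambda>l s. Q l (s, t)) (\<lambda>k s. P k (s, t))"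
    if "y j \<le> t" "t \<le> y (Suc j)" "\<And>l. l<M \<Longrightarrow> continuous_on UNIV (P l)" "\<And>k. k<M \<Longrightarrow> continuous_on UNIV (Q k)"
    for t P Q
    by (rule EF_sym_y[OF that(1,2) cB that(3,4) symK])
  have cV: "continuous_on UNIV (V l i' j')" if "l<M" "i'<Nx" "j'<Ny" for l i' j'
    by (rule poly2_cont[OF pV[OF that]])
  have cS1: "continuous_on UNIV (\<lambda>z. fst (SS l i' j' z))" if "l<M" "i'<Nx" "j'<Ny" for l i' j'
    by (rule poly2_cont[OF pS1[OF that]])
  have cS2: "continuous_on UNIV (\<lambda>z. snd (SS l i' j' z))" if "l<M" "i'<Nx" "j'<Ny" for l i' j'
    by (rule poly2_cont[OF pS2[OF that]])
  have symR: "EF M {y j..y (Suc j)} (\<lambda>k l t. A i j k l (x (Suc i), t)) (\<lambda>l t. V l i j (x (Suc i), t)) (\<lambda>k t. fst (SS k i j (x (Suc i), t)))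
     = EF M {y j..y (Suc j)} (\<lambda>k l t. A i j k l (x (Suc i), t)) (\<lambda>l t. fst (SS l i j (x (Suc i), t))) (\<lambda>k t. V k i j (x (Suc i), t))"
    by (rule symX[where s="x (Suc i)" and P="\<lambda>l. V l i j" and Q="\<lambda>k z. fst (SS k i j z)"])
       (use xl ij in \<open>auto intro: cV cS1\<close>)
  have symL: "EF M {y j..y (Suc j)} (\<lambda>k l t. A i j k l (x i, t)) (\<lambda>l t. V l i j (x i, t)) (\<lambda>k t. fst (SS k i j (x i, t)))
     = EF M {y j..y (Suc j)} (\<lambda>k l t. A i j k l (x i, t)) (\<lambda>l t. fst (SS l i j (x i, t))) (\<lambda>k t. V k i j (x i, t))"
    by (rule symX[where s="x i" and P="\<lambda>l. V l i j" and Q="\<lambda>k z. fst (SS k i j z)"])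
       (use xl ij in \<open>auto intro: cV cS1\<close>)
  have symR2: "EF M {y j..y (Suc j)} (\<lambda>k l t. A i j k l (x (Suc i), t)) (\<lambda>l t. V l (Suc i) j (x (Suc i), t)) (\<lambda>k t. fst (SS k i j (x (Suc i), t)))
     = EF M {y j..y (Suc j)} (\<lambda>k l t. A i j k l (x (Suc i), t)) (\<lambda>l t. fst (SS l i j (x (Suc i), t))) (\<lambda>k t. V k (Suc i) j (x (Suc i), t))"
    if "Suc i < Nx"
    by (rule symX[where s="x (Suc i)" and P="\<lambda>l. V l (Suc i) j" and Q="\<lambda>k z. fst (SS k i j z)"])
       (use xl ij that in \<open>auto intro: cV cS1\<close>)
  have symT: "EF M {x i..x (Suc i)} (\<lambda>k l s. A i j k l (s, y (Suc j))) (\<lambda>l s. V l i j (s, y (Suc j))) (\<lambda>k s. snd (SS k i j (s, y (Suc j))))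
     = EF M {x i..x (Suc i)} (\<lambda>k l s. A i j k l (s, y (Suc j))) (\<lambda>l s. snd (SS l i j (s, y (Suc j)))) (\<lambda>k s. V k i j (s, y (Suc j)))"
    by (rule symY[where t="y (Suc j)" and P="\<lambda>l. V l i j" and Q="\<lambda>k z. snd (SS k i j z)"])
       (use yl ij in \<open>auto intro: cV cS2\<close>)
  have symB: "EF M {x i..x (Suc i)} (\<lambda>k l s. A i j k l (s, y j)) (\<lambda>l s. V l i j (s, y j)) (\<lambda>k s. snd (SS k i j (s, y j)))
     = EF M {x i..x (Suc i)} (\<lambda>k l s. A i j k l (s, y j)) (\<lambda>l s. snd (SS l i j (s, y j))) (\<lambda>k s. V k i j (s, y j))"
    by (rule symY[where t="y j" and P="\<lambda>l. V l i j" and Q="\<lambda>k z. snd (SS k i j z)"])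
       (use yl ij in \<open>auto intro: cV cS2\<close>)
  have symT2: "EF M {x i..x (Suc i)} (\<lambda>k l s. A i j k l (s, y (Suc j))) (\<lambda>l s. V l i (Suc j) (s, y (Suc j))) (\<lambda>k s. snd (SS k i j (s, y (Suc j))))
     = EF M {x i..x (Suc i)} (\<lambda>k l s. A i j k l (s, y (Suc j))) (\<lambda>l s. snd (SS l i j (s, y (Suc j)))) (\<lambda>k s. V k i (Suc j) (s, y (Suc j)))"
    if "Suc j < Ny"
    by (rule symY[where t="y (Suc j)" and P="\<lambda>l. V l i (Suc j)" and Q="\<lambda>k z. snd (SS k i j z)"])
       (use yl ij that in \<open>auto intro: cV cS2\<close>)
  show ?thesis
    using ibp symR symL symT symB symR2 symT2 unfolding cell_def
    by (cases "i = 0"; cases "Suc i < Nx"; cases "j = 0"; cases "Suc j < Ny"; simp add: EF_zero; linarith)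
qed




declare Ck.simps(2)[simp del]

theorem theorem3:
  fixes x y :: "nat \<Rightarrow> real" and Nx Ny M deg :: nat and dt :: real
    and A :: "nat \<Rightarrow> nat \<Rightarrow> nat \<Rightarrow> nat \<Rightarrow> real \<times> real \<Rightarrow> real"
    and v :: "nat \<Rightarrow> nat \<Rightarrow> nat \<Rightarrow> nat \<Rightarrow> real \<times> real \<Rightarrow> real"
    and S :: "nat \<Rightarrow> nat \<Rightarrow> nat \<Rightarrow> nat \<Rightarrow> real \<times> real \<Rightarrow> real \<times> real"
  assumes Nx: "0 < Nx" and Ny: "0 < Ny" and M: "0 < M"
    and xmono: "\<forall>i<Nx. x i < x (Suc i)" and ymono: "\<forall>j<Ny. y j < y (Suc j)"
    and dt: "0 < dt"
    and A_smooth: "\<forall>i<Nx. \<forall>j<Ny. \<forall>k<M. \<forall>l<M. smooth_near (A i j k l) (cell x y i j)"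
    and A_sym: "\<forall>i<Nx. \<forall>j<Ny. \<forall>k<M. \<forall>l<M. \<forall>z\<in>cell x y i j. A i j k l z = A i j l k z"
    and A_pd: "\<forall>i<Nx. \<forall>j<Ny. \<forall>z\<in>cell x y i j. \<forall>\<xi> :: nat \<Rightarrow> real. (\<exists>k<M. \<xi> k \<noteq> 0) \<longrightarrow>
                 0 < (\<Sum>k<M. \<Sum>l<M. \<xi> k * A i j k l z * \<xi> l)"
    and v_space: "\<forall>n. \<forall>k<M. \<forall>i<Nx. \<forall>j<Ny. poly2 deg (v n k i j)"
    and S_space: "\<forall>n. \<forall>k<M. \<forall>i<Nx. \<forall>j<Ny.
                    poly2 deg (\<lambda>z. fst (S n k i j z)) \<and> poly2 deg (\<lambda>z. snd (S n k i j z))"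
    and scheme1: "\<forall>n\<ge>1. \<forall>i<Nx. \<forall>j<Ny. \<forall>p. (\<forall>k<M. poly2 deg (p k)) \<longrightarrow>
                    eq1 x y M dt A v S n i j p"
    and scheme2: "\<forall>n. \<forall>i<Nx. \<forall>j<Ny. \<forall>w.
                    (\<forall>k<M. poly2 deg (\<lambda>z. fst (w k z)) \<and> poly2 deg (\<lambda>z. snd (w k z))) \<longrightarrow>
                    eq2 x y Nx Ny M A v S n i j w"
  shows "\<forall>n\<ge>1. energy x y Nx Ny M dt v S (Suc n) = energy x y Nx Ny M dt v S n"
proof (intro allI impI)
  fix n :: nat assume n1: "1 \<le> n"
  have dt0: "dt \<noteq> 0" using dt by simp
  have comb: "(\<Sum>i<Nx. \<Sum>j<Ny.
      (\<Sum>k<M. integral (cell x y i j)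
        (\<lambda>z. (v (Suc n) k i j z - 2 * v n k i j z + v (n - 1) k i j z) / dt ^ 2 * v m k i j z))
    + (\<Sum>k<M. integral (cell x y i j) (\<lambda>z. S m k i j z \<bullet> S n k i j z))) = 0" for m
  proof -
    define XP where "XP i j = (if i = 0 then 0 else EF M {y j..y (Suc j)} (\<lambda>k l t. A (i - 1) j k l (x i, t))
           (\<lambda>l t. fst (S n l (i - 1) j (x i, t))) (\<lambda>k t. v m k i j (x i, t)))
     - (if Suc i < Nx then EF M {y j..y (Suc j)} (\<lambda>k l t. A i j k l (x (Suc i), t))
           (\<lambda>l t. fst (S n l i j (x (Suc i), t))) (\<lambda>k t. v m k (Suc i) j (x (Suc i), t)) else 0)" for i j
    define YP where "YP i j = (if j = 0 then 0 else EF M {x i..x (Suc i)} (\<lambda>k l s. A i (j - 1) k l (s, y j))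
           (\<lambda>l s. snd (S n l i (j - 1) (s, y j))) (\<lambda>k s. v m k i j (s, y j)))
     - (if Suc j < Ny then EF M {x i..x (Suc i)} (\<lambda>k l s. A i j k l (s, y (Suc j)))
           (\<lambda>l s. snd (S n l i j (s, y (Suc j)))) (\<lambda>k s. v m k i (Suc j) (s, y (Suc j))) else 0)" for i j
    have per: "(\<Sum>k<M. integral (cell x y i j)
        (\<lambda>z. (v (Suc n) k i j z - 2 * v n k i j z + v (n - 1) k i j z) / dt ^ 2 * v m k i j z))
    + (\<Sum>k<M. integral (cell x y i j) (\<lambda>z. S m k i j z \<bullet> S n k i j z)) = - (XP i j + YP i j)"
      if ij: "i<Nx" "j<Ny" for i j
    proof -
      have "\<forall>k<M. poly2 deg (v m k i j)" using v_space ij by blast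
      then have e1: "eq1 x y M dt A v S n i j (\<lambda>k. v m k i j)"
        by (intro scheme1[rule_format] n1 ij) auto
      have "\<forall>k<M. poly2 deg (\<lambda>z. fst (S n k i j z)) \<and> poly2 deg (\<lambda>z. snd (S n k i j z))" using S_space ij by blast
      then have e2: "eq2 x y Nx Ny M A v S m i j (\<lambda>k. S n k i j)"
        by (intro scheme2[rule_format] ij) auto
      have vs: "\<forall>k<M. \<forall>i<Nx. \<forall>j<Ny. poly2 deg (v m k i j)" using v_space by blast
      have ss: "\<forall>k<M. \<forall>i<Nx. \<forall>j<Ny. poly2 deg (\<lambda>z. fst (S n k i j z)) \<and> poly2 deg (\<lambda>z. snd (S n k i j z))"
        using S_space by blast
      note ck = cell_key[OF ij xmono ymono A_smooth A_sym vs ss]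
      show ?thesis using e1 e2 ck unfolding eq1_EF eq2_EF XP_def YP_def by linarith
    qed
    have X0: "(\<Sum>i<Nx. XP i j) = 0" for j
      unfolding XP_def
      using tele[where N=Nx and g="\<lambda>i. EF M {y j..y (Suc j)} (\<lambda>k l t. A (i - 1) j k l (x i, t))
           (\<lambda>l t. fst (S n l (i - 1) j (x i, t))) (\<lambda>k t. v m k i j (x i, t))"] by (simp only: diff_Suc_1)
    have Y0: "(\<Sum>j<Ny. YP i j) = 0" for i
      unfolding YP_def
      using tele[where N=Ny and g="\<lambda>j. EF M {x i..x (Suc i)} (\<lambda>k l s. A i (j - 1) k l (s, y j))
           (\<lambda>l s. snd (S n l i (j - 1) (s, y j))) (\<lambda>k s. v m k i j (s, y j))"] by (simp only: diff_Suc_1)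
    have "(\<Sum>i<Nx. \<Sum>j<Ny.
      (\<Sum>k<M. integral (cell x y i j)
        (\<lambda>z. (v (Suc n) k i j z - 2 * v n k i j z + v (n - 1) k i j z) / dt ^ 2 * v m k i j z))
    + (\<Sum>k<M. integral (cell x y i j) (\<lambda>z. S m k i j z \<bullet> S n k i j z)))
      = (\<Sum>i<Nx. \<Sum>j<Ny. - (XP i j + YP i j))"
      by (intro sum.cong refl) (rule per; simp)
    also have "\<dots> = - ((\<Sum>i<Nx. \<Sum>j<Ny. XP i j) + (\<Sum>i<Nx. \<Sum>j<Ny. YP i j))"
      by (simp add: sum.distrib sum_negf sum_subtractf)
    also have "\<dots> = - ((\<Sum>j<Ny. \<Sum>i<Nx. XP i j) + (\<Sum>i<Nx. \<Sum>j<Ny. YP i j))"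
      by (subst sum.swap) (rule refl)
    also have "\<dots> = 0" by (simp add: X0 Y0)
    finally show ?thesis .
  qed
  have cv: "continuous_on (cell x y i j) (v m k i j)" if "k<M" "i<Nx" "j<Ny" for m k i j
    using v_space that poly2_cont by blast
  have cS: "continuous_on (cell x y i j) (S m k i j)" if "k<M" "i<Nx" "j<Ny" for m k i j
  proof (rule cont_pair)
    show "continuous_on (cell x y i j) (\<lambda>z. fst (S m k i j z))" using S_space that poly2_cont by blast
    show "continuous_on (cell x y i j) (\<lambda>z. snd (S m k i j z))" using S_space that poly2_cont by blast
  qed
  have ic: "f integrable_on cell x y i j" if "continuous_on (cell x y i j) f" for f :: "real \<times> real \<Rightarrow> real" and i j
    using that unfolding cell_def by (rule integrable_continuous)
  have cellid: "integral (cell x y i j) (\<lambda>z. (norm ((v (Suc n) k i j z - v n k i j z) / dt))\<^sup>2)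
      + integral (cell x y i j) (\<lambda>z. (norm ((1 / 2) *\<^sub>R (S (Suc n) k i j z + S n k i j z)))\<^sup>2)
      - dt ^ 2 / 4 * integral (cell x y i j) (\<lambda>z. (norm ((1 / dt) *\<^sub>R (S (Suc n) k i j z - S n k i j z)))\<^sup>2)
      - (integral (cell x y i j) (\<lambda>z. (norm ((v n k i j z - v (n - 1) k i j z) / dt))\<^sup>2)
      + integral (cell x y i j) (\<lambda>z. (norm ((1 / 2) *\<^sub>R (S n k i j z + S (n - 1) k i j z)))\<^sup>2)
      - dt ^ 2 / 4 * integral (cell x y i j) (\<lambda>z. (norm ((1 / dt) *\<^sub>R (S n k i j z - S (n - 1) k i j z)))\<^sup>2))
    = integral (cell x y i j) (\<lambda>z. (v (Suc n) k i j z - 2 * v n k i j z + v (n - 1) k i j z) / dt ^ 2 * v (Suc n) k i j z)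
      + integral (cell x y i j) (\<lambda>z. S (Suc n) k i j z \<bullet> S n k i j z)
      - (integral (cell x y i j) (\<lambda>z. (v (Suc n) k i j z - 2 * v n k i j z + v (n - 1) k i j z) / dt ^ 2 * v (n - 1) k i j z)
      + integral (cell x y i j) (\<lambda>z. S (n - 1) k i j z \<bullet> S n k i j z))"
    if kij: "k<M" "i<Nx" "j<Ny" for k i j
  proof (rule six)
    fix z
    show "(norm ((v (Suc n) k i j z - v n k i j z) / dt))\<^sup>2
      + (norm ((1 / 2) *\<^sub>R (S (Suc n) k i j z + S n k i j z)))\<^sup>2
      - dt ^ 2 / 4 * (norm ((1 / dt) *\<^sub>R (S (Suc n) k i j z - S n k i j z)))\<^sup>2
      - ((norm ((v n k i j z - v (n - 1) k i j z) / dt))\<^sup>2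
      + (norm ((1 / 2) *\<^sub>R (S n k i j z + S (n - 1) k i j z)))\<^sup>2
      - dt ^ 2 / 4 * (norm ((1 / dt) *\<^sub>R (S n k i j z - S (n - 1) k i j z)))\<^sup>2)
    = (v (Suc n) k i j z - 2 * v n k i j z + v (n - 1) k i j z) / dt ^ 2 * v (Suc n) k i j z
      + S (Suc n) k i j z \<bullet> S n k i j z
      - ((v (Suc n) k i j z - 2 * v n k i j z + v (n - 1) k i j z) / dt ^ 2 * v (n - 1) k i j z
      + S (n - 1) k i j z \<bullet> S n k i j z)"
      using ptS[OF dt0, of "S (Suc n) k i j z" "S n k i j z"] ptS[OF dt0, of "S n k i j z" "S (n - 1) k i j z"]
        ptV[OF dt0, of "v (Suc n) k i j z" "v n k i j z" "v (n - 1) k i j z"]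
      by (simp add: inner_commute[of "S n k i j z"])
  qed (auto intro!: ic continuous_intros cv cS simp: kij dt0)
  have Eq: "energy x y Nx Ny M dt v S (Suc n) - energy x y Nx Ny M dt v S n
    = (\<Sum>i<Nx. \<Sum>j<Ny. \<Sum>k<M. integral (cell x y i j) (\<lambda>z. (norm ((v (Suc n) k i j z - v n k i j z) / dt))\<^sup>2)
      + integral (cell x y i j) (\<lambda>z. (norm ((1 / 2) *\<^sub>R (S (Suc n) k i j z + S n k i j z)))\<^sup>2)
      - dt ^ 2 / 4 * integral (cell x y i j) (\<lambda>z. (norm ((1 / dt) *\<^sub>R (S (Suc n) k i j z - S n k i j z)))\<^sup>2)
      - (integral (cell x y i j) (\<lambda>z. (norm ((v n k i j z - v (n - 1) k i j z) / dt))\<^sup>2)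
      + integral (cell x y i j) (\<lambda>z. (norm ((1 / 2) *\<^sub>R (S n k i j z + S (n - 1) k i j z)))\<^sup>2)
      - dt ^ 2 / 4 * integral (cell x y i j) (\<lambda>z. (norm ((1 / dt) *\<^sub>R (S n k i j z - S (n - 1) k i j z)))\<^sup>2)))"
    unfolding energy_def l2sq_def diff_Suc_1
    by (simp only: sum.distrib sum_subtractf sum_distrib_left)
  also have "\<dots> = (\<Sum>i<Nx. \<Sum>j<Ny. \<Sum>k<M.
        integral (cell x y i j) (\<lambda>z. (v (Suc n) k i j z - 2 * v n k i j z + v (n - 1) k i j z) / dt ^ 2 * v (Suc n) k i j z)
      + integral (cell x y i j) (\<lambda>z. S (Suc n) k i j z \<bullet> S n k i j z)
      - (integral (cell x y i j) (\<lambda>z. (v (Suc n) k i j z - 2 * v n k i j z + v (n - 1) k i j z) / dt ^ 2 * v (n - 1) k i j z)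
      + integral (cell x y i j) (\<lambda>z. S (n - 1) k i j z \<bullet> S n k i j z)))"
    by (intro sum.cong refl) (rule cellid; simp)
  also have "\<dots> = (\<Sum>i<Nx. \<Sum>j<Ny.
      (\<Sum>k<M. integral (cell x y i j)
        (\<lambda>z. (v (Suc n) k i j z - 2 * v n k i j z + v (n - 1) k i j z) / dt ^ 2 * v (Suc n) k i j z))
    + (\<Sum>k<M. integral (cell x y i j) (\<lambda>z. S (Suc n) k i j z \<bullet> S n k i j z)))
    - (\<Sum>i<Nx. \<Sum>j<Ny.
      (\<Sum>k<M. integral (cell x y i j)
        (\<lambda>z. (v (Suc n) k i j z - 2 * v n k i j z + v (n - 1) k i j z) / dt ^ 2 * v (n - 1) k i j z))
    + (\<Sum>k<M. integral (cell x y i j) (\<lambda>z. S (n - 1) k i j z \<bullet> S n k i j z)))"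
    by (simp only: sum.distrib sum_subtractf)
  also have "\<dots> = 0" by (simp only: comb diff_zero)
  finally show "energy x y Nx Ny M dt v S (Suc n) = energy x y Nx Ny M dt v S n" by simp
qed


end
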